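(* Let $G$ be a finite multigraph (no loops), let $\ell \geq 4$ be an integer, let $s$ be a vertex of $G$, and let $A \subsetneq V(G)$ with $s \notin A$ be such that $\lambda_G(x,y) \geq \ell$ for any two distinct $x,y\in A$ and such that no edge of $G$ has both endvertices outside $A$. Assume $\deg(s) \geq 4$, let $I_1$ and $I_2$ be two distinct maximal independent sets in $L(G,s,\tau_A)$, each of size at least $2$, and let $D_1, D_2$ be dangerous sets such that for $i=1,2$ and every edge $sv \in I_i$ we have $v \in D_i$. Then: (1) $|I_1 \cap I_2| \leq 1$; (2) if $|I_1 \cap I_2| = 1$ and $I_1 \cup I_2 \neq V(L(G,s,\tau_A))$, then $\ell$ is odd.
   Context: $\lambda_G(x,y)$ is the maximum number of pairwise edge-disjoint $x$–$y$ paths in $G$; $\delta_G(X)$ is the set of edges with exactly one endvertex in $X$. Lifting two distinct edges $sx,sy$ means deleting them and adding a new edge $xy$. The target function $\tau_A$ assigns $\ell$ to pairs of vertices both in $A$ and $0$ otherwise; a pair of edges at $s$ is $\tau_A$-admissible if after lifting them the new graph $G'$ satisfies $\lambda_{G'}(x,y)\ge\tau_A(x,y)$ for all distinct $x,y\in V(G)\setminus\{s\}$. The lifting graph $L(G,s,\tau_A)$ has as vertices the edges incident with $s$, two being adjacent iff they form a $\tau_A$-admissible pair. A set $D\subseteq V(G)\setminus\{s\}$ is dangerous if both $D$ and $V(G)\setminus(D\cup\{s\})$ contain vertices of $A$ and $|\delta_G(D)|\le \ell+1$. *)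

theory Defs
  imports Main
begin

definition multigraph :: "'v set \<Rightarrow> 'e set \<Rightarrow> ('e \<Rightarrow> 'v set) \<Rightarrow> bool" where
  "multigraph V E ends \<longleftrightarrow> finite V \<and> finite E \<and>
     (\<forall>e\<in>E. ends e \<subseteq> V \<and> card (ends e) = 2)"

definition is_path :: "('e \<Rightarrow> 'v set) \<Rightarrow> 'e set \<Rightarrow> 'v \<Rightarrow> 'v \<Rightarrow> 'e list \<Rightarrow> bool" where
  "is_path ends E x y es \<longleftrightarrow>
     (\<exists>ws. length ws = Suc (length es) \<and> distinct ws \<and> hd ws = x \<and> last ws = y \<and>
        (\<forall>i<length es. es ! i \<in> E \<and> ends (es ! i) = {ws ! i, ws ! Suc i}))"

definition local_conn :: "('e \<Rightarrow> 'v set) \<Rightarrow> 'e set \<Rightarrow> 'v \<Rightarrow> 'v \<Rightarrow> nat" where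
  "local_conn ends E x y = Sup {card P | P. finite P \<and> (\<forall>p\<in>P. is_path ends E x y p) \<and>
        (\<forall>p\<in>P. \<forall>q\<in>P. p \<noteq> q \<longrightarrow> set p \<inter> set q = {})}"

definition cut :: "('e \<Rightarrow> 'v set) \<Rightarrow> 'e set \<Rightarrow> 'v set \<Rightarrow> 'e set" where
  "cut ends E X = {e \<in> E. card (ends e \<inter> X) = 1}"

definition incident :: "('e \<Rightarrow> 'v set) \<Rightarrow> 'e set \<Rightarrow> 'v \<Rightarrow> 'e set" where
  "incident ends E s = {e \<in> E. s \<in> ends e}"

definition degree :: "('e \<Rightarrow> 'v set) \<Rightarrow> 'e set \<Rightarrow> 'v \<Rightarrow> nat" where
  "degree ends E s = card (incident ends E s)"

definition other_end :: "('e \<Rightarrow> 'v set) \<Rightarrow> 'v \<Rightarrow> 'e \<Rightarrow> 'v" where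
  "other_end ends s e = the_elem (ends e - {s})"

text \<open>Lifting e1 = sx, e2 = sy: the new graph has edges Some e for the old edges
other than e1, e2, and the new edge None joining x and y.\<close>
definition lift_edges :: "'e set \<Rightarrow> 'e \<Rightarrow> 'e \<Rightarrow> 'e option set" where
  "lift_edges E e1 e2 = Some ` (E - {e1, e2}) \<union> {None}"

definition lift_ends :: "('e \<Rightarrow> 'v set) \<Rightarrow> 'v \<Rightarrow> 'e \<Rightarrow> 'e \<Rightarrow> 'e option \<Rightarrow> 'v set" where
  "lift_ends ends s e1 e2 eo =
     (case eo of None \<Rightarrow> {other_end ends s e1, other_end ends s e2} | Some e \<Rightarrow> ends e)"

definition tau :: "'v set \<Rightarrow> nat \<Rightarrow> 'v \<Rightarrow> 'v \<Rightarrow> nat" where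
  "tau A l x y = (if x \<in> A \<and> y \<in> A then l else 0)"

definition admissible ::
  "'v set \<Rightarrow> 'e set \<Rightarrow> ('e \<Rightarrow> 'v set) \<Rightarrow> 'v \<Rightarrow> 'v set \<Rightarrow> nat \<Rightarrow> 'e \<Rightarrow> 'e \<Rightarrow> bool" where
  "admissible V E ends s A l e1 e2 \<longleftrightarrow>
     e1 \<in> incident ends E s \<and> e2 \<in> incident ends E s \<and> e1 \<noteq> e2 \<and>
     (\<forall>x\<in>V - {s}. \<forall>y\<in>V - {s}. x \<noteq> y \<longrightarrow>
        local_conn (lift_ends ends s e1 e2) (lift_edges E e1 e2) x y \<ge> tau A l x y)"

text \<open>Independent sets of the lifting graph L(G,s,tau_A), whose vertex set is
incident ends E s and whose adjacency is admissibility.\<close>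
definition indep_L ::
  "'v set \<Rightarrow> 'e set \<Rightarrow> ('e \<Rightarrow> 'v set) \<Rightarrow> 'v \<Rightarrow> 'v set \<Rightarrow> nat \<Rightarrow> 'e set \<Rightarrow> bool" where
  "indep_L V E ends s A l I \<longleftrightarrow> I \<subseteq> incident ends E s \<and>
     (\<forall>e1\<in>I. \<forall>e2\<in>I. \<not> admissible V E ends s A l e1 e2)"

definition max_indep_L ::
  "'v set \<Rightarrow> 'e set \<Rightarrow> ('e \<Rightarrow> 'v set) \<Rightarrow> 'v \<Rightarrow> 'v set \<Rightarrow> nat \<Rightarrow> 'e set \<Rightarrow> bool" where
  "max_indep_L V E ends s A l I \<longleftrightarrow> indep_L V E ends s A l I \<and>
     (\<forall>J. indep_L V E ends s A l J \<and> I \<subseteq> J \<longrightarrow> J = I)"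

definition dangerous ::
  "'v set \<Rightarrow> 'e set \<Rightarrow> ('e \<Rightarrow> 'v set) \<Rightarrow> 'v \<Rightarrow> 'v set \<Rightarrow> nat \<Rightarrow> 'v set \<Rightarrow> bool" where
  "dangerous V E ends s A l D \<longleftrightarrow> D \<subseteq> V - {s} \<and> D \<inter> A \<noteq> {} \<and>
     (V - (D \<union> {s})) \<inter> A \<noteq> {} \<and> card (cut ends E D) \<le> l + 1"

end

theory Submission imports Defs begin

definition xcut :: "('e \<Rightarrow> 'v set) \<Rightarrow> 'e set \<Rightarrow> 'v set \<Rightarrow> 'e set" where
  "xcut ends E X = {e \<in> E. \<exists>a b. a \<in> X \<and> b \<notin> X \<and> ends e = {a, b}}"

lemma list_cross:
  "ws \<noteq> [] \<Longrightarrow> hd ws \<in> X \<Longrightarrow> last ws \<notin> X \<Longrightarrow>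
   \<exists>i. Suc i < length ws \<and> ws ! i \<in> X \<and> ws ! Suc i \<notin> X"
proof (induction ws)
  case Nil then show ?case by simp
next
  case (Cons a rest)
  show ?case
  proof (cases "rest = []")
    case True then show ?thesis using Cons by simp
  next
    case False
    show ?thesis
    proof (cases "hd rest \<in> X")
      case True
      then obtain i where "Suc i < length rest" "rest ! i \<in> X" "rest ! Suc i \<notin> X"
        using Cons False by auto
      then show ?thesis by (intro exI[of _ "Suc i"]) auto
    next
      case F2: False
      then show ?thesis using Cons False
        by (intro exI[of _ 0]) (auto simp: hd_conv_nth)
    qed
  qed
qed

lemma path_cross:
  assumes "is_path ends E x y p" "x \<in> X" "y \<notin> X"
  shows "\<exists>ed. ed \<in> set p \<and> ed \<in> xcut ends E X"
proof -
  obtain ws where ws: "length ws = Suc (length p)" "distinct ws" "hd ws = x" "last ws = y"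
    "\<forall>i<length p. p ! i \<in> E \<and> ends (p ! i) = {ws ! i, ws ! Suc i}"
    using assms(1) unfolding is_path_def by blast
  have "ws \<noteq> []" using ws(1) by auto
  then obtain i where i: "Suc i < length ws" "ws ! i \<in> X" "ws ! Suc i \<notin> X"
    using list_cross[of ws X] ws assms by auto
  have "i < length p" using i ws(1) by simp
  then show ?thesis using ws(5) i unfolding xcut_def
    by (intro exI[of _ "p ! i"]) auto
qed

definition pathfams where
  "pathfams ends E x y = {P. finite P \<and> (\<forall>p\<in>P. is_path ends E x y p) \<and>
        (\<forall>p\<in>P. \<forall>q\<in>P. p \<noteq> q \<longrightarrow> set p \<inter> set q = {})}"

lemma local_conn_alt: "local_conn ends E x y = Sup (card ` pathfams ends E x y)"
  unfolding local_conn_def pathfams_def by (rule arg_cong[where f=Sup]) blast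

lemma menger_easy:
  assumes fin: "finite E" and le: "l \<le> local_conn ends E x y" and X: "x \<in> X" "y \<notin> X"
  shows "l \<le> card (xcut ends E X)"
proof -
  have "{} \<in> pathfams ends E x y" unfolding pathfams_def by simp
  then have ne: "card ` pathfams ends E x y \<noteq> {}" by blast
  have bd: "card P \<le> card (xcut ends E X)" if "P \<in> pathfams ends E x y" for P
  proof -
    have P: "\<forall>p\<in>P. is_path ends E x y p"
        "\<forall>p\<in>P. \<forall>q\<in>P. p \<noteq> q \<longrightarrow> set p \<inter> set q = {}"
      using that unfolding pathfams_def by auto
    define f where "f p = (SOME ed. ed \<in> set p \<and> ed \<in> xcut ends E X)" for p
    have f: "f p \<in> set p \<and> f p \<in> xcut ends E X" if "p \<in> P" for p
      unfolding f_def using path_cross[OF P(1)[rule_format, OF that] X] by (rule someI_ex)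
    have "inj_on f P"
    proof (rule inj_onI)
      fix p q assume pq: "p \<in> P" "q \<in> P" "f p = f q"
      show "p = q"
      proof (rule ccontr)
        assume "p \<noteq> q"
        then have "set p \<inter> set q = {}" using P(2) pq by blast
        moreover have "f p \<in> set p" "f p \<in> set q" using f[OF pq(1)] f[OF pq(2)] pq(3) by auto
        ultimately show False by blast
      qed
    qed
    moreover have "f ` P \<subseteq> xcut ends E X" using f by blast
    moreover have "finite (xcut ends E X)" using fin unfolding xcut_def by simp
    ultimately show ?thesis by (rule card_inj_on_le)
  qed
  have "Sup (card ` pathfams ends E x y) \<le> card (xcut ends E X)"
    using ne bd by (intro cSup_least) auto
  then show ?thesis using le unfolding local_conn_alt by linarith
qed


lemma edge_ends:
  assumes "multigraph V E ends" "x \<in> E"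
  obtains a b where "a \<noteq> b" "ends x = {a, b}" "a \<in> V" "b \<in> V"
  using assms unfolding multigraph_def card_2_iff by blast

lemma other_end_props:
  assumes G: "multigraph V E ends" and e: "e \<in> incident ends E s"
  shows "ends e = {s, other_end ends s e}" "other_end ends s e \<noteq> s" "other_end ends s e \<in> V"
    "e \<in> E"
proof -
  have eE: "e \<in> E" "s \<in> ends e" using e unfolding incident_def by auto
  obtain a b where ab: "a \<noteq> b" "ends e = {a, b}" "a \<in> V" "b \<in> V" using edge_ends[OF G eE(1)] .
  obtain u where u: "ends e = {s, u}" "u \<noteq> s" "u \<in> V"
    using ab eE(2) by (metis insert_commute insertE singletonD)
  have "ends e - {s} = {u}" using u by auto
  then have "other_end ends s e = u" unfolding other_end_def by simp
  then show "ends e = {s, other_end ends s e}" "other_end ends s e \<noteq> s" "other_end ends s e \<in> V"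
    "e \<in> E" using u eE by auto
qed

lemma lift_cut:
  assumes fin: "finite E" and e12: "e1 \<noteq> e2" "e1 \<in> E" "e2 \<in> E"
    and en: "ends e1 = {s, other_end ends s e1}" "ends e2 = {s, other_end ends s e2}"
    and X: "s \<notin> X" "other_end ends s e1 \<in> X" "other_end ends s e2 \<in> X"
  shows "card (xcut (lift_ends ends s e1 e2) (lift_edges E e1 e2) X) + 2 \<le> card (cut ends E X)"
proof -
  have sub: "xcut (lift_ends ends s e1 e2) (lift_edges E e1 e2) X \<subseteq> Some ` (cut ends E X - {e1, e2})"
  proof
    fix eo assume "eo \<in> xcut (lift_ends ends s e1 e2) (lift_edges E e1 e2) X"
    then obtain a b where ab: "eo \<in> lift_edges E e1 e2" "a \<in> X" "b \<notin> X"
        "lift_ends ends s e1 e2 eo = {a, b}"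
      unfolding xcut_def by blast
    show "eo \<in> Some ` (cut ends E X - {e1, e2})"
    proof (cases eo)
      case None
      then have "{a, b} \<subseteq> X" using ab X unfolding lift_ends_def by auto
      then show ?thesis using ab by auto
    next
      case (Some x)
      then have x: "x \<in> E - {e1, e2}" "ends x = {a, b}"
        using ab unfolding lift_edges_def lift_ends_def by auto
      have "ends x \<inter> X = {a}" using x ab by auto
      then have "x \<in> cut ends E X" using x unfolding cut_def by auto
      then show ?thesis using Some x by auto
    qed
  qed
  have fc: "finite (cut ends E X)" using fin unfolding cut_def by simp
  have "ends e1 \<inter> X = {other_end ends s e1}" "ends e2 \<inter> X = {other_end ends s e2}"
    using en X by auto
  then have inc: "{e1, e2} \<subseteq> cut ends E X" using e12 unfolding cut_def by auto
  have "card (xcut (lift_ends ends s e1 e2) (lift_edges E e1 e2) X) \<le> card (Some ` (cut ends E X - {e1, e2}))"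
    using sub fc by (intro card_mono) auto
  also have "\<dots> \<le> card (cut ends E X - {e1, e2})" by (rule card_image_le) (use fc in auto)
  also have "\<dots> = card (cut ends E X) - 2" using inc fc e12 by (simp add: card_Diff_subset)
  finally show ?thesis using inc fc e12
    by (metis add_diff_inverse_nat card_2_iff card_mono less_diff_conv2 not_less add_le_imp_le_diff
        le_diff_conv le_refl)
qed

definition cc :: "'v set \<Rightarrow> 'v set \<Rightarrow> nat" where
  "cc S X = (if card (S \<inter> X) = 1 then 1 else 0)"

lemma cc2: "a \<noteq> b \<Longrightarrow> cc {a, b} X = (if (a \<in> X) = (b \<in> X) then 0 else 1)"
  by (cases "a \<in> X"; cases "b \<in> X") (auto simp: cc_def Int_insert_left)

lemma card_cut_sum: "finite E \<Longrightarrow> card (cut ends E X) = (\<Sum>x\<in>E. cc (ends x) X)"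
  unfolding cut_def cc_def by (simp add: sum.inter_filter[symmetric])

lemma xcut_sub: "xcut ends E X \<subseteq> cut ends E X"
  unfolding xcut_def cut_def by (auto simp: Int_insert_left)


lemma count1:
  assumes G: "multigraph V E ends" and F: "F \<subseteq> E"
    and Fe: "\<forall>x\<in>F. \<exists>u. ends x = {s, u} \<and> u \<in> D1 \<inter> D2" and s: "s \<notin> D1" "s \<notin> D2"
  shows "card (cut ends E (D1 - D2)) + card (cut ends E (D2 - D1)) + 2 * card F
         \<le> card (cut ends E D1) + card (cut ends E D2)"
proof -
  have fin: "finite E" using G unfolding multigraph_def by simp
  have finF: "finite F" using F fin finite_subset by blast
  have ew: "cc (ends x) (D1 - D2) + cc (ends x) (D2 - D1) + (if x \<in> F then 2 else 0)
      \<le> cc (ends x) D1 + cc (ends x) D2" if xE: "x \<in> E" for x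
  proof -
    obtain a b where ab: "a \<noteq> b" "ends x = {a, b}" using edge_ends[OF G xE] by metis
    show ?thesis
    proof (cases "x \<in> F")
      case True
      then obtain u where "ends x = {s, u}" "u \<in> D1 \<inter> D2" using Fe by blast
      moreover then have "u \<noteq> s" using s by auto
      ultimately show ?thesis using True s by (simp add: cc2)
    qed (use ab in \<open>auto simp: cc2\<close>)
  qed
  have "(\<Sum>x\<in>E. cc (ends x) (D1 - D2) + cc (ends x) (D2 - D1) + (if x \<in> F then 2 else 0))
      \<le> (\<Sum>x\<in>E. cc (ends x) D1 + cc (ends x) D2)" by (rule sum_mono) (rule ew)
  moreover have "(\<Sum>x\<in>E. (if x \<in> F then 2 else 0::nat)) = 2 * card F"
  proof -
    have "(\<Sum>x\<in>E. (if x \<in> F then 2 else 0::nat)) = (\<Sum>x\<in>{x\<in>E. x \<in> F}. 2)"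
      using sum.inter_filter[OF fin, of "\<lambda>_. 2::nat" "\<lambda>x. x \<in> F"] by simp
    also have "{x\<in>E. x \<in> F} = F" using F by auto
    finally show ?thesis by simp
  qed
  ultimately show ?thesis using fin by (simp add: card_cut_sum sum.distrib)
qed

lemma count_parity:
  assumes G: "multigraph V E ends" and d: "X \<inter> Y = {}"
  shows "even (card (cut ends E (X \<union> Y)) + card (cut ends E X) + card (cut ends E Y))"
proof -
  have fin: "finite E" using G unfolding multigraph_def by simp
  have "even (\<Sum>x\<in>E. cc (ends x) (X \<union> Y) + cc (ends x) X + cc (ends x) Y)"
  proof (rule dvd_sum)
    fix x assume "x \<in> E"
    then obtain a b where ab: "a \<noteq> b" "ends x = {a, b}" using edge_ends[OF G] by metis
    show "even (cc (ends x) (X \<union> Y) + cc (ends x) X + cc (ends x) Y)"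
      using ab d by (auto simp: cc2)
  qed
  then show ?thesis using fin by (simp add: card_cut_sum sum.distrib)
qed

lemma count_sub:
  assumes G: "multigraph V E ends"
  shows "card (cut ends E (X \<inter> Y)) + card (cut ends E (X \<union> Y))
     \<le> card (cut ends E X) + card (cut ends E Y)"
proof -
  have fin: "finite E" using G unfolding multigraph_def by simp
  have "(\<Sum>x\<in>E. cc (ends x) (X \<inter> Y) + cc (ends x) (X \<union> Y))
     \<le> (\<Sum>x\<in>E. cc (ends x) X + cc (ends x) Y)"
  proof (rule sum_mono)
    fix x assume "x \<in> E"
    then obtain a b where ab: "a \<noteq> b" "ends x = {a, b}" using edge_ends[OF G] by metis
    show "cc (ends x) (X \<inter> Y) + cc (ends x) (X \<union> Y) \<le> cc (ends x) X + cc (ends x) Y"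
      using ab by (auto simp: cc2)
  qed
  then show ?thesis using fin by (simp add: card_cut_sum sum.distrib)
qed


lemma adm_sym:
  assumes "admissible V E ends s A l e1 e2"
  shows "admissible V E ends s A l e2 e1"
proof -
  have "lift_edges E e1 e2 = lift_edges E e2 e1" unfolding lift_edges_def by (simp add: insert_commute)
  moreover have "lift_ends ends s e1 e2 = lift_ends ends s e2 e1"
    unfolding lift_ends_def by (rule ext) (simp add: insert_commute split: option.split)
  ultimately show ?thesis using assms unfolding admissible_def by auto
qed

lemma max_adm:
  assumes I: "max_indep_L V E ends s A l I" and k: "k \<in> incident ends E s" "k \<notin> I"
  shows "\<exists>j\<in>I. admissible V E ends s A l k j"
proof (rule ccontr)
  assume na: "\<not> ?thesis"
  have iI: "indep_L V E ends s A l I" using I unfolding max_indep_L_def by blast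
  have "indep_L V E ends s A l (insert k I)"
    unfolding indep_L_def
  proof (intro conjI ballI)
    show "insert k I \<subseteq> incident ends E s" using iI k unfolding indep_L_def by auto
  next
    fix e1 e2 assume "e1 \<in> insert k I" "e2 \<in> insert k I"
    show "\<not> admissible V E ends s A l e1 e2"
    proof
      assume a: "admissible V E ends s A l e1 e2"
      then have "e1 \<noteq> e2" unfolding admissible_def by blast
      have ii: "\<forall>e1\<in>I. \<forall>e2\<in>I. \<not> admissible V E ends s A l e1 e2"
        using iI unfolding indep_L_def by blast
      show False
      proof (cases "e1 = k")
        case True
        then have "e2 \<in> I" using \<open>e1 \<noteq> e2\<close> \<open>e2 \<in> insert k I\<close> by blast
        then show False using na a True by blast
      next
        case False
        then have e1I: "e1 \<in> I" using \<open>e1 \<in> insert k I\<close> by blast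
        show False
        proof (cases "e2 = k")
          case True
          then show False using na adm_sym[OF a] e1I by blast
        next
          case False
          then have "e2 \<in> I" using \<open>e2 \<in> insert k I\<close> by blast
          then show False using ii e1I a by blast
        qed
      qed
    qed
  qed
  then have "insert k I = I" using I unfolding max_indep_L_def by blast
  then show False using k by blast
qed

lemma lift_big:
  assumes G: "multigraph V E ends" and adm: "admissible V E ends s A l g h"
    and D: "D \<subseteq> V - {s}" and x: "x \<in> D" "x \<in> A" and y: "y \<in> A" "y \<in> V" "y \<noteq> s" "y \<notin> D"
    and gh: "other_end ends s g \<in> D" "other_end ends s h \<in> D"
  shows "l + 2 \<le> card (cut ends E D)"
proof -
  have fin: "finite E" using G unfolding multigraph_def by simp
  have ginc: "g \<in> incident ends E s" "h \<in> incident ends E s" "g \<noteq> h"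
    using adm unfolding admissible_def by auto
  have "x \<in> V - {s}" "y \<in> V - {s}" "x \<noteq> y" using x y D by auto
  then have "tau A l x y \<le> local_conn (lift_ends ends s g h) (lift_edges E g h) x y"
    using adm unfolding admissible_def by blast
  then have "l \<le> local_conn (lift_ends ends s g h) (lift_edges E g h) x y"
    using x y unfolding tau_def by simp
  moreover have "finite (lift_edges E g h)" using fin unfolding lift_edges_def by simp
  ultimately have "l \<le> card (xcut (lift_ends ends s g h) (lift_edges E g h) D)"
    using menger_easy[of "lift_edges E g h" l "lift_ends ends s g h" x y D] x y by blast
  moreover have "card (xcut (lift_ends ends s g h) (lift_edges E g h) D) + 2 \<le> card (cut ends E D)"
    using D gh other_end_props[OF G ginc(1)] other_end_props[OF G ginc(2)] ginc(3)
    by (intro lift_cut fin) auto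
  ultimately show ?thesis by linarith
qed

lemma conn_G:
  assumes G: "multigraph V E ends"
    and Aconn: "\<forall>x\<in>A. \<forall>y\<in>A. x \<noteq> y \<longrightarrow> local_conn ends E x y \<ge> l"
    and x: "x \<in> X" "x \<in> A" and y: "y \<in> A" "y \<notin> X"
  shows "l \<le> card (cut ends E X)"
proof -
  have fin: "finite E" using G unfolding multigraph_def by simp
  have "l \<le> local_conn ends E x y" using Aconn x y by metis
  then have "l \<le> card (xcut ends E X)" using menger_easy[OF fin _ x(1) y(2)] by blast
  moreover have "card (xcut ends E X) \<le> card (cut ends E X)"
    using fin xcut_sub[of ends E X] by (intro card_mono) (auto simp: cut_def)
  ultimately show ?thesis by linarith
qed

theorem proposition4p6:
  fixes V :: "'v set" and E :: "'e set" and ends :: "'e \<Rightarrow> 'v set"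
    and s :: 'v and A :: "'v set" and l :: nat
    and I1 I2 :: "'e set" and D1 D2 :: "'v set"
  assumes G: "multigraph V E ends"
    and l4: "l \<ge> 4"
    and sV: "s \<in> V"
    and AV: "A \<subset> V" and sA: "s \<notin> A"
    and Aconn: "\<forall>x\<in>A. \<forall>y\<in>A. x \<noteq> y \<longrightarrow> local_conn ends E x y \<ge> l"
    and noout: "\<forall>e\<in>E. ends e \<inter> A \<noteq> {}"
    and deg: "degree ends E s \<ge> 4"
    and I1: "max_indep_L V E ends s A l I1" and I1c: "card I1 \<ge> 2"
    and I2: "max_indep_L V E ends s A l I2" and I2c: "card I2 \<ge> 2"
    and I12: "I1 \<noteq> I2"
    and D1: "dangerous V E ends s A l D1" and D2: "dangerous V E ends s A l D2"
    and D1I: "\<forall>e\<in>I1. other_end ends s e \<in> D1"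
    and D2I: "\<forall>e\<in>I2. other_end ends s e \<in> D2"
  shows "card (I1 \<inter> I2) \<le> 1 \<and>
    (card (I1 \<inter> I2) = 1 \<and> I1 \<union> I2 \<noteq> incident ends E s \<longrightarrow> odd l)"
proof -
  have fin: "finite E" using G unfolding multigraph_def by simp
  have oe: "other_end ends s e \<in> A" "other_end ends s e \<in> V" "other_end ends s e \<noteq> s"
     "ends e = {s, other_end ends s e}" "e \<in> E"
    if "e \<in> incident ends E s" for e
  proof -
    note p = other_end_props[OF G that]
    have "ends e \<inter> A \<noteq> {}" using noout p(4) by blast
    then show "other_end ends s e \<in> A" using p(1) sA by auto
  qed (use other_end_props[OF G that] in auto)
  have iI1: "I1 \<subseteq> incident ends E s" "\<forall>e1\<in>I1. \<forall>e2\<in>I1. \<not> admissible V E ends s A l e1 e2"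
    using I1 unfolding max_indep_L_def indep_L_def by auto
  have iI2: "I2 \<subseteq> incident ends E s" "\<forall>e1\<in>I2. \<forall>e2\<in>I2. \<not> admissible V E ends s A l e1 e2"
    using I2 unfolding max_indep_L_def indep_L_def by auto
  have "\<not> I1 \<subseteq> I2"
  proof
    assume "I1 \<subseteq> I2"
    then have "I2 = I1" using I1 I2 unfolding max_indep_L_def by blast
    then show False using I12 by simp
  qed
  then obtain g where g: "g \<in> I1" "g \<notin> I2" by blast
  have gi: "g \<in> incident ends E s" using g iI1 by blast
  obtain h where h: "h \<in> I2" "admissible V E ends s A l g h" using max_adm[OF I2 gi g(2)] by blast
  have hi: "h \<in> incident ends E s" using h iI2 by blast
  have D1p: "D1 \<subseteq> V - {s}" "card (cut ends E D1) \<le> l + 1"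
    using D1 unfolding dangerous_def by auto
  obtain a1 where a1: "a1 \<in> D1" "a1 \<in> A" using D1 unfolding dangerous_def by blast
  obtain b1 where b1: "b1 \<in> A" "b1 \<in> V" "b1 \<noteq> s" "b1 \<notin> D1" using D1 unfolding dangerous_def by blast
  have D2p: "D2 \<subseteq> V - {s}" "card (cut ends E D2) \<le> l + 1"
    using D2 unfolding dangerous_def by auto
  obtain a2 where a2: "a2 \<in> D2" "a2 \<in> A" using D2 unfolding dangerous_def by blast
  obtain b2 where b2: "b2 \<in> A" "b2 \<in> V" "b2 \<noteq> s" "b2 \<notin> D2" using D2 unfolding dangerous_def by blast
  have ugD1: "other_end ends s g \<in> D1" using D1I g by blast
  have uhD2: "other_end ends s h \<in> D2" using D2I h by blast
  have uhD1: "other_end ends s h \<notin> D1"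
  proof
    assume "other_end ends s h \<in> D1"
    then have "l + 2 \<le> card (cut ends E D1)" using lift_big[OF G h(2) D1p(1) a1 b1 ugD1] by blast
    then show False using D1p by linarith
  qed
  have ugD2: "other_end ends s g \<notin> D2"
  proof
    assume "other_end ends s g \<in> D2"
    then have "l + 2 \<le> card (cut ends E D2)" using lift_big[OF G h(2) D2p(1) a2 b2 _ uhD2] by blast
    then show False using D2p by linarith
  qed
  have sD: "s \<notin> D1" "s \<notin> D2" using D1p D2p by auto
  have cX1: "l \<le> card (cut ends E (D1 - D2))" if "e \<in> I1 \<inter> I2" for e
  proof -
    have "e \<in> incident ends E s" using that iI1 by blast
    then have "other_end ends s e \<in> A" using oe by blast
    moreover have "other_end ends s e \<in> D2" using that D2I by blast
    ultimately show ?thesis using conn_G[OF G Aconn, of "other_end ends s g" "D1 - D2"] ugD1 ugD2 oe[OF gi]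
      by blast
  qed
  have cX2: "l \<le> card (cut ends E (D2 - D1))" if "e \<in> I1 \<inter> I2" for e
  proof -
    have "e \<in> incident ends E s" using that iI1 by blast
    then have "other_end ends s e \<in> A" using oe by blast
    moreover have "other_end ends s e \<in> D1" using that D1I by blast
    ultimately show ?thesis using conn_G[OF G Aconn, of "other_end ends s h" "D2 - D1"] uhD1 uhD2 oe[OF hi]
      by blast
  qed
  have Fok: "\<forall>x\<in>F. \<exists>u. ends x = {s, u} \<and> u \<in> D1 \<inter> D2" if "F \<subseteq> I1 \<inter> I2" for F
  proof
    fix x assume "x \<in> F"
    then have "x \<in> I1 \<inter> I2" "x \<in> incident ends E s" using that iI1 by auto
    then show "\<exists>u. ends x = {s, u} \<and> u \<in> D1 \<inter> D2" using oe D1I D2I by blast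
  qed
  have FE: "F \<subseteq> E" if "F \<subseteq> I1 \<inter> I2" for F
    using that iI1 oe by blast
  have part1: "card (I1 \<inter> I2) \<le> 1"
  proof (rule ccontr)
    assume "\<not> ?thesis"
    then have c2: "2 \<le> card (I1 \<inter> I2)" by simp
    then have "finite (I1 \<inter> I2)" by (metis card.infinite not_numeral_le_zero)
    have "I1 \<inter> I2 \<noteq> {}" using c2 by (metis card.empty not_numeral_le_zero)
    then obtain e where e: "e \<in> I1 \<inter> I2" by blast
    have "1 \<le> card (I1 \<inter> I2 - {e})" using c2 e \<open>finite (I1 \<inter> I2)\<close> by simp
    then have "I1 \<inter> I2 - {e} \<noteq> {}" by (metis card.empty not_one_le_zero)
    then obtain f where f: "f \<in> I1 \<inter> I2" "f \<noteq> e" by blast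
    have F: "{e, f} \<subseteq> I1 \<inter> I2" "card {e, f} = 2" using e f by auto
    have "card (cut ends E (D1 - D2)) + card (cut ends E (D2 - D1)) + 2 * card {e, f}
         \<le> card (cut ends E D1) + card (cut ends E D2)"
      by (rule count1[OF G FE[OF F(1)] Fok[OF F(1)] sD])
    then show False using cX1[OF e] cX2[OF e] F(2) D1p(2) D2p(2) l4 by linarith
  qed
  have part2: "odd l" if c1: "card (I1 \<inter> I2) = 1" and un: "I1 \<union> I2 \<noteq> incident ends E s"
  proof (rule ccontr)
    assume ev: "\<not> odd l"
    obtain e where e1: "I1 \<inter> I2 = {e}" using c1 card_1_singletonE by blast
    then have e: "e \<in> I1 \<inter> I2" by blast
    obtain k where k: "k \<in> incident ends E s" "k \<notin> I1" "k \<notin> I2" using un iI1 iI2 by blast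
    obtain j1 where j1: "j1 \<in> I1" "admissible V E ends s A l k j1" using max_adm[OF I1 k(1,2)] by blast
    obtain j2 where j2: "j2 \<in> I2" "admissible V E ends s A l k j2" using max_adm[OF I2 k(1,3)] by blast
    have ukD1: "other_end ends s k \<notin> D1"
    proof
      assume "other_end ends s k \<in> D1"
      moreover have "other_end ends s j1 \<in> D1" using j1 D1I by blast
      ultimately have "l + 2 \<le> card (cut ends E D1)" using lift_big[OF G j1(2) D1p(1) a1 b1] by blast
      then show False using D1p by linarith
    qed
    have ukD2: "other_end ends s k \<notin> D2"
    proof
      assume "other_end ends s k \<in> D2"
      moreover have "other_end ends s j2 \<in> D2" using j2 D2I by blast
      ultimately have "l + 2 \<le> card (cut ends E D2)" using lift_big[OF G j2(2) D2p(1) a2 b2] by blast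
      then show False using D2p by linarith
    qed
    have F: "{e} \<subseteq> I1 \<inter> I2" using e by blast
    have "card (cut ends E (D1 - D2)) + card (cut ends E (D2 - D1)) + 2 * card {e}
         \<le> card (cut ends E D1) + card (cut ends E D2)"
      by (rule count1[OF G FE[OF F] Fok[OF F] sD])
    then have eqs: "card (cut ends E (D1 - D2)) = l" "card (cut ends E D1) = l + 1"
      using cX1[OF e] cX2[OF e] D1p(2) D2p(2) by auto
    have ue: "other_end ends s e \<in> D1 \<inter> D2" "other_end ends s e \<in> A"
      using e D1I D2I oe iI1 by auto
    have uk: "other_end ends s k \<in> A" "other_end ends s k \<in> V" "other_end ends s k \<noteq> s"
      using oe[OF k(1)] by auto
    have "(D1 - D2) \<union> (D1 \<inter> D2) = D1" "(D1 - D2) \<inter> (D1 \<inter> D2) = {}" by auto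
    then have "even (card (cut ends E D1) + card (cut ends E (D1 - D2)) + card (cut ends E (D1 \<inter> D2)))"
      using count_parity[OF G, of "D1 - D2" "D1 \<inter> D2"] by simp
    then have odd0: "odd (card (cut ends E (D1 \<inter> D2)))" using eqs by simp
    have "l \<le> card (cut ends E (D1 \<inter> D2))"
      using conn_G[OF G Aconn ue(1) ue(2) uk(1)] ukD1 by blast
    moreover have "card (cut ends E (D1 \<inter> D2)) \<noteq> l" using odd0 ev by auto
    ultimately have c0: "l + 1 \<le> card (cut ends E (D1 \<inter> D2))" by linarith
    have "card (cut ends E (D1 \<inter> D2)) + card (cut ends E (D1 \<union> D2))
     \<le> card (cut ends E D1) + card (cut ends E D2)" by (rule count_sub[OF G])
    then have cZ: "card (cut ends E (D1 \<union> D2)) \<le> l + 1" using c0 D1p(2) D2p(2) by linarith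
    have "l + 2 \<le> card (cut ends E (D1 \<union> D2))"
      using lift_big[OF G h(2), of "D1 \<union> D2" "other_end ends s e" "other_end ends s k"]
        D1p(1) D2p(1) ue uk ukD1 ukD2 ugD1 uhD2 by blast
    then show False using cZ by linarith
  qed
  show ?thesis using part1 part2 by blast
qed

end
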